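(* Let $1\le p<\infty$, $N\ge2$, and let $T_1,\dots,T_N$ be unilateral pseudo-shifts $T_i=T_{f_i,\omega^{(i)}}$ on $\ell^p(\mathbb{N})$. Then $T_1,\dots,T_N$ are d-hypercyclic if and only if they possess a dense d-hypercyclic manifold.
   Context: $\{e_m\}$ is the canonical basis of $\ell^p(\mathbb{N})$ over $\mathbb{K}\in\{\mathbb{R},\mathbb{C}\}$. For a strictly increasing $f:\mathbb{N}\to\mathbb{N}$ with $f(1)>1$ and a bounded, nonzero sequence of scalars $\omega=(w_{f(m)})_{m\in\mathbb{N}}$, the unilateral pseudo-shift is $T_{f,\omega}(\sum_m\alpha_me_m)=\sum_mw_{f(m)}\alpha_{f(m)}e_m$. Operators $T_1,\dots,T_N$ on $X$ are d-hypercyclic if some $x$ (a d-hypercyclic vector) has $\{(T_1^nx,\dots,T_N^nx):n\ge0\}$ dense in $\oplus_{i=1}^NX$; a dense d-hypercyclic manifold is a dense linear subspace whose nonzero vectors are all d-hypercyclic vectors. *)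

theory Defs
  imports "HOL-Analysis.Analysis"
begin

text \<open>Sequences are indexed by nat starting at 0 (index m here corresponds to m+1 in the paper).
  The scalar field is a complete real normed field, i.e. (up to isometric isomorphism) R or C.\<close>

definition lp_space :: "real \<Rightarrow> (nat \<Rightarrow> 'a::real_normed_field) set" where
  "lp_space p = {x. summable (\<lambda>m. norm (x m) powr p)}"

definition lp_norm :: "real \<Rightarrow> (nat \<Rightarrow> 'a::real_normed_field) \<Rightarrow> real" where
  "lp_norm p x = (\<Sum>m. norm (x m) powr p) powr (1 / p)"

definition pseudo_shift :: "(nat \<Rightarrow> nat) \<Rightarrow> (nat \<Rightarrow> 'a::real_normed_field)
    \<Rightarrow> (nat \<Rightarrow> 'a) \<Rightarrow> (nat \<Rightarrow> 'a)" where
  "pseudo_shift f w x = (\<lambda>m. w (f m) * x (f m))"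

definition pseudo_shift_data :: "(nat \<Rightarrow> nat) \<Rightarrow> (nat \<Rightarrow> 'a::real_normed_field) \<Rightarrow> bool" where
  "pseudo_shift_data f w \<longleftrightarrow> strict_mono f \<and> f 0 > 0 \<and>
     bounded (range (\<lambda>m. w (f m))) \<and> (\<forall>m. w (f m) \<noteq> 0)"

text \<open>x is a d-hypercyclic vector for T_0,...,T_{N-1} on l^p: the orbit
  {(T_0^n x, ..., T_{N-1}^n x) : n} is dense in the N-fold direct sum of l^p
  (product topology = max of the l^p distances).\<close>
definition d_hypercyclic_vector ::
  "real \<Rightarrow> nat \<Rightarrow> (nat \<Rightarrow> (nat \<Rightarrow> 'a::real_normed_field) \<Rightarrow> (nat \<Rightarrow> 'a)) \<Rightarrow> (nat \<Rightarrow> 'a) \<Rightarrow> bool" where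
  "d_hypercyclic_vector p N T x \<longleftrightarrow> x \<in> lp_space p \<and>
     (\<forall>y. (\<forall>i<N. y i \<in> lp_space p) \<longrightarrow>
        (\<forall>\<epsilon>>0. \<exists>n. \<forall>i<N. lp_norm p (\<lambda>m. (T i ^^ n) x m - y i m) < \<epsilon>))"

definition d_hypercyclic :: "real \<Rightarrow> nat \<Rightarrow> (nat \<Rightarrow> (nat \<Rightarrow> 'a::real_normed_field) \<Rightarrow> (nat \<Rightarrow> 'a)) \<Rightarrow> bool" where
  "d_hypercyclic p N T \<longleftrightarrow> (\<exists>x. d_hypercyclic_vector p N T x)"

definition dense_d_hypercyclic_manifold ::
  "real \<Rightarrow> nat \<Rightarrow> (nat \<Rightarrow> (nat \<Rightarrow> 'a::real_normed_field) \<Rightarrow> (nat \<Rightarrow> 'a)) \<Rightarrow> (nat \<Rightarrow> 'a) set \<Rightarrow> bool" where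
  "dense_d_hypercyclic_manifold p N T M \<longleftrightarrow>
     M \<subseteq> lp_space p \<and> (\<lambda>m. 0) \<in> M \<and>
     (\<forall>x\<in>M. \<forall>y\<in>M. (\<lambda>m. x m + y m) \<in> M) \<and>
     (\<forall>c. \<forall>x\<in>M. (\<lambda>m. c * x m) \<in> M) \<and>
     (\<forall>y\<in>lp_space p. \<forall>\<epsilon>>0. \<exists>x\<in>M. lp_norm p (\<lambda>m. x m - y m) < \<epsilon>) \<and>
     (\<forall>x\<in>M. x \<noteq> (\<lambda>m. 0) \<longrightarrow> d_hypercyclic_vector p N T x)"

end

theory Submission
  imports Defs
begin



definition psum :: "real \<Rightarrow> (nat \<Rightarrow> 'a::real_normed_field) \<Rightarrow> real" where
  "psum p u = (\<Sum>m. norm (u m) powr p)"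

lemma lp_iff: "u \<in> lp_space p \<longleftrightarrow> summable (\<lambda>m. norm (u m) powr p)"
  by (simp add: lp_space_def)

lemma psum_nonneg: "u \<in> lp_space p \<Longrightarrow> psum p u \<ge> 0"
  unfolding psum_def lp_iff by (rule suminf_nonneg) auto

lemma lp_dom:
  assumes v: "v \<in> lp_space p" and p: "p > 0" and C: "C \<ge> 0"
    and le: "\<And>m. norm (u m) \<le> C * norm (v m)"
  shows "u \<in> lp_space p" "psum p u \<le> C powr p * psum p v"
proof -
  have le2: "norm (u m) powr p \<le> C powr p * norm (v m) powr p" for m
  proof -
    have "norm (u m) powr p \<le> (C * norm (v m)) powr p"
      using le p by (intro powr_mono2) auto
    also have "\<dots> = C powr p * norm (v m) powr p" using C by (simp add: powr_mult)
    finally show ?thesis .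
  qed
  have s: "summable (\<lambda>m. C powr p * norm (v m) powr p)"
    using v by (simp add: lp_iff summable_mult)
  show u: "u \<in> lp_space p" unfolding lp_iff
    by (rule summable_comparison_test'[OF s]) (use le2 in auto)
  show "psum p u \<le> C powr p * psum p v"
    unfolding psum_def suminf_mult[OF v[unfolded lp_iff], symmetric]
    by (rule suminf_le) (use le2 s u[unfolded lp_iff] in auto)
qed

lemma powr_add_le:
  fixes a b p :: real
  assumes "a \<ge> 0" "b \<ge> 0" "p > 0"
  shows "(a + b) powr p \<le> 2 powr p * (a powr p + b powr p)"
proof -
  have "(a + b) powr p \<le> (2 * max a b) powr p"
    using assms by (intro powr_mono2) auto
  also have "\<dots> = 2 powr p * max a b powr p" using assms by (simp add: powr_mult)
  also have "max a b powr p \<le> a powr p + b powr p"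
    by (cases "a \<le> b") auto
  hence "2 powr p * max a b powr p \<le> 2 powr p * (a powr p + b powr p)"
    by (intro mult_left_mono) auto
  finally show ?thesis .
qed

lemma lp_tri:
  assumes u: "u \<in> lp_space p" and v: "v \<in> lp_space p" and p: "p > 0"
    and le: "\<And>m. norm (z m) \<le> norm (u m) + norm (v m)"
  shows "z \<in> lp_space p" "psum p z \<le> 2 powr p * (psum p u + psum p v)"
proof -
  have le2: "norm (z m) powr p \<le> 2 powr p * (norm (u m) powr p + norm (v m) powr p)" for m
  proof -
    have "norm (z m) powr p \<le> (norm (u m) + norm (v m)) powr p"
      using le p by (intro powr_mono2) auto
    also have "\<dots> \<le> 2 powr p * (norm (u m) powr p + norm (v m) powr p)"
      using p by (intro powr_add_le) auto
    finally show ?thesis .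
  qed
  have s: "summable (\<lambda>m. 2 powr p * (norm (u m) powr p + norm (v m) powr p))"
    using u v by (simp add: lp_iff summable_mult summable_add)
  show z: "z \<in> lp_space p" unfolding lp_iff
    by (rule summable_comparison_test'[OF s]) (use le2 in auto)
  have "psum p z \<le> (\<Sum>m. 2 powr p * (norm (u m) powr p + norm (v m) powr p))"
    unfolding psum_def by (rule suminf_le) (use le2 s z[unfolded lp_iff] in auto)
  also have "\<dots> = 2 powr p * (psum p u + psum p v)"
    using u v unfolding psum_def lp_iff by (simp add: suminf_mult suminf_add summable_add)
  finally show "psum p z \<le> 2 powr p * (psum p u + psum p v)" .
qed

lemma lp_coord:
  assumes "u \<in> lp_space p"
  shows "norm (u M) powr p \<le> psum p u"
proof -
  have "(\<Sum>m\<in>{M}. norm (u m) powr p) \<le> psum p u"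
    unfolding psum_def using assms by (intro sum_le_suminf) (auto simp: lp_iff)
  thus ?thesis by simp
qed

lemma lp_single:
  assumes p: "p > 0"
  shows "(\<lambda>m. if m = M then \<beta> else 0) \<in> lp_space p"
    "psum p (\<lambda>m. if m = M then \<beta> else 0) = norm \<beta> powr p"
proof -
  have eq: "(\<lambda>m. norm (if m = M then \<beta> else 0) powr p) = (\<lambda>m. if m = M then norm \<beta> powr p else 0)"
    by auto
  have "(\<lambda>m. norm (if m = M then \<beta> else 0) powr p) sums (norm \<beta> powr p)"
    unfolding eq using sums_single[of M "\<lambda>_. norm \<beta> powr p"] by simp
  thus "(\<lambda>m. if m = M then \<beta> else 0) \<in> lp_space p" "psum p (\<lambda>m. if m = M then \<beta> else 0) = norm \<beta> powr p"
    unfolding lp_iff psum_def by (auto simp: sums_iff)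
qed

lemma lp_zero: "(\<lambda>m. 0) \<in> lp_space p" "psum p (\<lambda>m. 0) = 0"
  by (auto simp: lp_iff psum_def)

lemma lp_scale:
  assumes "u \<in> lp_space p" "p > 0"
  shows "(\<lambda>m. c * u m) \<in> lp_space p" "psum p (\<lambda>m. c * u m) \<le> norm c powr p * psum p u"
  using lp_dom[OF assms(1,2), of "norm c" "\<lambda>m. c * u m"] by (auto simp: norm_mult)

lemma lp_finite:
  assumes "\<And>m. m \<ge> L \<Longrightarrow> u m = 0"
  shows "u \<in> lp_space p"
  unfolding lp_iff by (rule summable_comparison_test'[of "\<lambda>_. 0" L]) (auto simp: assms)

lemma lp_tail:
  assumes u: "u \<in> lp_space p" and e: "e > 0"
  shows "eventually (\<lambda>K. psum p (\<lambda>m. if m < K then 0 else u m) < e) sequentially"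
proof -
  have s: "summable (\<lambda>m. norm (u m) powr p)" using u by (simp add: lp_iff)
  obtain N0 where N0: "\<And>n. n \<ge> N0 \<Longrightarrow> norm (\<Sum>i. norm (u (i + n)) powr p) < e"
    using suminf_exist_split[OF e s] by auto
  show ?thesis unfolding eventually_sequentially
  proof (intro exI allI impI)
    fix K assume K: "K \<ge> N0"
    have "(\<lambda>i. norm (u (i + K)) powr p) sums (\<Sum>i. norm (u (i + K)) powr p)"
      using summable_ignore_initial_segment[OF s, of K] by (intro summable_sums) simp
    hence "(\<lambda>i. norm (if i + K < K then 0 else u (i + K)) powr p) sums (\<Sum>i. norm (u (i + K)) powr p)"
      by simp
    hence "(\<lambda>i. norm (if i < K then 0 else u i) powr p) sums (\<Sum>i. norm (u (i + K)) powr p)"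
      using sums_zero_iff_shift[of K "\<lambda>i. norm (if i < K then 0 else u i) powr p"] by simp
    hence "psum p (\<lambda>m. if m < K then 0 else u m) = (\<Sum>i. norm (u (i + K)) powr p)"
      unfolding psum_def by (simp add: sums_iff)
    also have "\<dots> < e" using N0[OF K] by auto
    finally show "psum p (\<lambda>m. if m < K then 0 else u m) < e" .
  qed
qed

lemma lp_norm_less:
  assumes u: "u \<in> lp_space p" and e: "e > 0" and p: "p > 0"
  shows "lp_norm p u < e \<longleftrightarrow> psum p u < e powr p"
proof -
  have S: "psum p u \<ge> 0" using psum_nonneg[OF u] .
  have eq: "lp_norm p u = psum p u powr (1/p)" by (simp add: lp_norm_def psum_def)
  show ?thesis
  proof
    assume "lp_norm p u < e"
    hence "(psum p u powr (1/p)) powr p < e powr p" unfolding eq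
      using p by (intro powr_less_mono2) auto
    thus "psum p u < e powr p" using S p by (simp add: powr_powr)
  next
    assume "psum p u < e powr p"
    hence "psum p u powr (1/p) < (e powr p) powr (1/p)" using S p by (intro powr_less_mono2) auto
    thus "lp_norm p u < e" unfolding eq using e p by (simp add: powr_powr)
  qed
qed




primrec wp :: "(nat \<Rightarrow> nat) \<Rightarrow> (nat \<Rightarrow> 'a::real_normed_field) \<Rightarrow> nat \<Rightarrow> nat \<Rightarrow> 'a" where
  "wp f w 0 m = 1"
| "wp f w (Suc n) m = w (f m) * wp f w n (f m)"

lemma ps_funpow: "(pseudo_shift f w ^^ n) v m = wp f w n m * v ((f ^^ n) m)"
proof (induction n arbitrary: m)
  case 0 then show ?case by simp
next
  case (Suc n)
  have "(pseudo_shift f w ^^ Suc n) v m = w (f m) * (pseudo_shift f w ^^ n) v (f m)"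
    by (simp add: pseudo_shift_def)
  also have "\<dots> = wp f w (Suc n) m * v ((f ^^ Suc n) m)"
    using Suc by (simp add: funpow_Suc_right del: funpow.simps)
  finally show ?case .
qed

lemma sm_ge:
  fixes f :: "nat \<Rightarrow> nat"
  assumes "strict_mono f" "f 0 > 0"
  shows "f m \<ge> m + 1"
proof (induction m)
  case 0 then show ?case using assms by simp
next
  case (Suc m)
  have "f m < f (Suc m)" using assms(1) by (simp add: strict_mono_def)
  then show ?case using Suc by simp
qed

lemma funpow_ge:
  fixes f :: "nat \<Rightarrow> nat"
  assumes "strict_mono f" "f 0 > 0"
  shows "(f ^^ n) m \<ge> m + n"
proof (induction n)
  case 0 then show ?case by simp
next
  case (Suc n)
  then show ?case using sm_ge[OF assms, of "(f ^^ n) m"] by simp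
qed

lemma summable_reindex_sm:
  fixes g :: "nat \<Rightarrow> real"
  assumes s: "summable g" and g: "\<And>n. g n \<ge> 0" and f: "strict_mono f"
  shows "summable (\<lambda>m. g (f m))"
proof (rule summableI_nonneg_bounded[where x = "suminf g"])
  fix n
  have inj: "inj_on f {..<n}" using f strict_mono_imp_inj_on by blast
  have "(\<Sum>i<n. g (f i)) = sum g (f ` {..<n})" by (simp add: sum.reindex[OF inj])
  also have "\<dots> \<le> suminf g" using s g by (intro sum_le_suminf) auto
  finally show "(\<Sum>i<n. g (f i)) \<le> suminf g" .
qed (use g in auto)

lemma ps_lp:
  assumes d: "pseudo_shift_data f w" and v: "v \<in> lp_space p" and p: "p > 0"
  shows "pseudo_shift f w v \<in> lp_space p"
proof -
  obtain B where B: "\<And>m. norm (w (f m)) \<le> B"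
    using d unfolding pseudo_shift_data_def bounded_iff by auto
  have B0: "B \<ge> 0" using B[of 0] norm_ge_zero order_trans by blast
  have s: "summable (\<lambda>m. norm (v m) powr p)" using v by (simp add: lp_iff)
  have sm: "strict_mono f" using d by (simp add: pseudo_shift_data_def)
  have vf: "(\<lambda>m. v (f m)) \<in> lp_space p"
    using summable_reindex_sm[OF s _ sm] by (simp add: lp_iff)
  show ?thesis
  proof (rule lp_dom(1)[OF vf p B0])
    fix m show "norm (pseudo_shift f w v m) \<le> B * norm (v (f m))"
      unfolding pseudo_shift_def norm_mult by (intro mult_right_mono B) simp
  qed
qed

lemma ps_funpow_lp:
  assumes d: "pseudo_shift_data f w" and v: "v \<in> lp_space p" and p: "p > 0"
  shows "(pseudo_shift f w ^^ n) v \<in> lp_space p"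
proof (induction n)
  case 0 show ?case using v by simp
next
  case (Suc n) show ?case using ps_lp[OF d Suc p] by simp
qed




lemma lp_add: "u \<in> lp_space p \<Longrightarrow> v \<in> lp_space p \<Longrightarrow> p > 0 \<Longrightarrow> (\<lambda>m. u m + v m) \<in> lp_space p"
  by (rule lp_tri(1)[of u p v]) (auto intro: norm_triangle_ineq)

lemma lp_diff: "u \<in> lp_space p \<Longrightarrow> v \<in> lp_space p \<Longrightarrow> p > 0 \<Longrightarrow> (\<lambda>m. u m - v m) \<in> lp_space p"
  by (rule lp_tri(1)[of u p v]) (auto intro: norm_triangle_ineq4)

lemma powr_less_cancel':
  fixes a c p :: real
  assumes "a powr p < c powr p" "p > 0" "a \<ge> 0" "c \<ge> 0"
  shows "a < c"
proof (rule ccontr)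
  assume "\<not> a < c"
  hence "c powr p \<le> a powr p" using assms by (intro powr_mono2) auto
  thus False using assms(1) by simp
qed

locale dhs =
  fixes p :: real and N :: nat and f :: "nat \<Rightarrow> nat \<Rightarrow> nat"
    and w :: "nat \<Rightarrow> nat \<Rightarrow> 'a::real_normed_field" and x :: "nat \<Rightarrow> 'a"
  assumes p1: "1 \<le> p" and N0: "0 < N"
    and data: "\<And>i. i < N \<Longrightarrow> pseudo_shift_data (f i) (w i)"
    and hc: "d_hypercyclic_vector p N (\<lambda>i. pseudo_shift (f i) (w i)) x"
begin

abbreviation TT :: "nat \<Rightarrow> (nat \<Rightarrow> 'a) \<Rightarrow> nat \<Rightarrow> 'a" where
  "TT i \<equiv> pseudo_shift (f i) (w i)"

lemma p0: "p > 0" using p1 by simp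

lemma x_lp: "x \<in> lp_space p" using hc by (simp add: d_hypercyclic_vector_def)

lemma orb_lp: "i < N \<Longrightarrow> v \<in> lp_space p \<Longrightarrow> (TT i ^^ n) v \<in> lp_space p"
  using ps_funpow_lp[OF data _ p0] by blast

lemma hit:
  assumes t: "\<And>i. i < N \<Longrightarrow> t i \<in> lp_space p" and d: "\<delta> > 0"
  shows "\<exists>n. \<forall>i<N. psum p (\<lambda>m. (TT i ^^ n) x m - t i m) < \<delta>"
proof -
  have e: "\<delta> powr (1/p) > 0" using d by simp
  obtain n where n: "\<And>i. i < N \<Longrightarrow> lp_norm p (\<lambda>m. (TT i ^^ n) x m - t i m) < \<delta> powr (1/p)"
    using hc t e unfolding d_hypercyclic_vector_def by blast
  have "psum p (\<lambda>m. (TT i ^^ n) x m - t i m) < \<delta>" if i: "i < N" for i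
  proof -
    have mem: "(\<lambda>m. (TT i ^^ n) x m - t i m) \<in> lp_space p"
      by (rule lp_diff[OF orb_lp[OF i x_lp] t[OF i] p0])
    have "psum p (\<lambda>m. (TT i ^^ n) x m - t i m) < (\<delta> powr (1/p)) powr p"
      using n[OF i] lp_norm_less[OF mem e p0] by simp
    thus ?thesis using d p0 by (simp add: powr_powr)
  qed
  thus ?thesis by blast
qed

lemma hit_late:
  assumes t: "\<And>i. i < N \<Longrightarrow> t i \<in> lp_space p" and d: "\<delta> > 0"
  shows "\<exists>n\<ge>R. \<forall>i<N. psum p (\<lambda>m. (TT i ^^ n) x m - t i m) < \<delta>"
proof -
  define q where "q = \<delta> / (4 * 2 powr p)"
  have q0: "q > 0" using d by (simp add: q_def)
  define b where "b = q powr (1/p)"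
  have b0: "b > 0" using q0 by (simp add: b_def)
  have bp: "b powr p = q" using q0 p0 by (simp add: b_def powr_powr)
  define d' where "d' = min q ((b/2) powr p)"
  have d'0: "d' > 0" using q0 b0 by (simp add: d'_def)
  define u where "u n = (\<lambda>m. (TT 0 ^^ n) x m - t 0 m)" for n
  have ulp: "u n \<in> lp_space p" for n
    unfolding u_def by (rule lp_diff[OF orb_lp[OF N0 x_lp] t[OF N0] p0])
  have ev: "eventually (\<lambda>m. norm (u n m) powr p < (b/2) powr p) sequentially" for n
  proof -
    have "(\<lambda>m. norm (u n m) powr p) \<longlonglongrightarrow> 0"
      using ulp[of n] by (intro summable_LIMSEQ_zero) (simp add: lp_iff)
    moreover have "(0::real) < (b/2) powr p" using b0 by simp
    ultimately show ?thesis by (rule order_tendstoD(2))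
  qed
  have "eventually (\<lambda>m. \<forall>n\<in>{..<R}. norm (u n m) powr p < (b/2) powr p) sequentially"
    by (rule eventually_ball_finite) (use ev in auto)
  then obtain M where M: "\<And>n. n < R \<Longrightarrow> norm (u n M) powr p < (b/2) powr p"
    unfolding eventually_sequentially by blast
  have Mb: "norm (u n M) < b/2" if "n < R" for n
  proof (rule ccontr)
    assume "\<not> norm (u n M) < b/2"
    hence "(b/2) powr p \<le> norm (u n M) powr p" using b0 p0 by (intro powr_mono2) auto
    thus False using M[OF that] by simp
  qed
  define sg where "sg = (\<lambda>m. if m = M then (of_real b :: 'a) else 0)"
  have sglp: "sg \<in> lp_space p" and sgps: "psum p sg = q"
    using lp_single[OF p0, of M "of_real b :: 'a"] b0 bp by (auto simp: sg_def)
  define t' where "t' i = (if i = 0 then (\<lambda>m. t 0 m + sg m) else t i)" for i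
  have t'lp: "t' i \<in> lp_space p" if "i < N" for i
    using lp_add[OF t[OF N0] sglp p0] t[OF that] by (simp add: t'_def)
  obtain n where n: "\<And>i. i < N \<Longrightarrow> psum p (\<lambda>m. (TT i ^^ n) x m - t' i m) < d'"
    using hit[of t' d', OF t'lp d'0] by blast
  define dd where "dd = (\<lambda>m. (TT 0 ^^ n) x m - t' 0 m)"
  have ddlp: "dd \<in> lp_space p" unfolding dd_def by (rule lp_diff[OF orb_lp[OF N0 x_lp] t'lp[OF N0] p0])
  have ddps: "psum p dd < d'" using n[OF N0] by (simp add: dd_def)
  have dd_u: "dd m = u n m - sg m" for m by (simp add: dd_def u_def t'_def)
  have nR: "n \<ge> R"
  proof (rule ccontr)
    assume "\<not> n \<ge> R" hence nR: "n < R" by simp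
    have "norm (dd M) powr p \<le> psum p dd" by (rule lp_coord[OF ddlp])
    also have "\<dots> < (b/2) powr p" using ddps by (simp add: d'_def)
    finally have lt0: "norm (dd M) powr p < (b/2) powr p" .
    have lt: "norm (dd M) < b/2"
      by (rule powr_less_cancel'[OF lt0 p0]) (use b0 in auto)
    have "b = norm (sg M)" using b0 by (simp add: sg_def)
    also have "sg M = u n M - dd M" using dd_u[of M] by simp
    also have "norm (u n M - dd M) \<le> norm (u n M) + norm (dd M)" by (rule norm_triangle_ineq4)
    finally show False using Mb[OF nR] lt by simp
  qed
  have "psum p (\<lambda>m. (TT i ^^ n) x m - t i m) < \<delta>" if i: "i < N" for i
  proof (cases "i = 0")
    case True
    have "psum p (\<lambda>m. (TT i ^^ n) x m - t i m) \<le> 2 powr p * (psum p dd + psum p sg)"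
    proof (rule lp_tri(2)[OF ddlp sglp p0])
      fix m
      have "(TT i ^^ n) x m - t i m = dd m + sg m" using True by (simp add: dd_def t'_def)
      thus "norm ((TT i ^^ n) x m - t i m) \<le> norm (dd m) + norm (sg m)" by (simp add: norm_triangle_ineq)
    qed
    also have "\<dots> < 2 powr p * (q + q)"
      using ddps sgps by (intro mult_strict_left_mono) (auto simp: d'_def)
    also have "\<dots> = \<delta> / 2" by (simp add: q_def)
    finally show ?thesis using d by simp
  next
    case False
    have "psum p (\<lambda>m. (TT i ^^ n) x m - t i m) < d'" using n[OF i] False by (simp add: t'_def)
    also have "d' \<le> q" by (simp add: d'_def)
    also have "q \<le> \<delta>"
    proof -
      have "(1::real) \<le> 2 powr p" using p0 by (intro ge_one_powr_ge_zero) auto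
      hence "\<delta> / (4 * 2 powr p) \<le> \<delta> / 1" using d by (intro divide_left_mono) auto
      thus ?thesis by (simp add: q_def)
    qed
    finally show ?thesis .
  qed
  thus ?thesis using nR by blast
qed

end



context dhs begin

definition "jj s = fst (prod_decode s)"
definition "JJ s = fst (prod_decode (snd (prod_decode s)))"
definition "rr s = snd (prod_decode (snd (prod_decode s)))"
definition "rho s = 1 / (real (rr s) + 1)"

lemma rho_pos: "rho s > 0" by (simp add: rho_def)

lemma decode_enc:
  "jj (prod_encode (j, prod_encode (J, r))) = j"
  "JJ (prod_encode (j, prod_encode (J, r))) = J"
  "rr (prod_encode (j, prod_encode (J, r))) = r"
  by (simp_all add: jj_def JJ_def rr_def)

lemma jj_le: "jj s \<le> s"
proof -
  have "s = prod_encode (prod_decode s)" by simp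
  also have "prod_decode s = (jj s, snd (prod_decode s))" by (simp add: jj_def)
  finally show ?thesis using le_prod_encode_1 by metis
qed

definition "KK s = (SOME K. \<forall>i<N. psum p (\<lambda>m. if m < K then 0 else (TT i ^^ JJ s) x m) < rho s)"

lemma KK: "i < N \<Longrightarrow> psum p (\<lambda>m. if m < KK s then 0 else (TT i ^^ JJ s) x m) < rho s"
proof -
  have "eventually (\<lambda>K. \<forall>i\<in>{..<N}. psum p (\<lambda>m. if m < K then 0 else (TT i ^^ JJ s) x m) < rho s) sequentially"
    by (rule eventually_ball_finite) (auto intro!: lp_tail orb_lp x_lp rho_pos)
  then obtain K0 where "\<forall>i<N. psum p (\<lambda>m. if m < K0 then 0 else (TT i ^^ JJ s) x m) < rho s"
    unfolding eventually_sequentially by auto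
  hence "\<exists>K. \<forall>i<N. psum p (\<lambda>m. if m < K then 0 else (TT i ^^ JJ s) x m) < rho s" by blast
  from someI_ex[OF this] show "i < N \<Longrightarrow> ?thesis" by (simp add: KK_def)
qed

definition "tt s i = (\<lambda>m. if m < KK s then (TT i ^^ JJ s) x m else 0)"

lemma tt_lp: "tt s i \<in> lp_space p"
  by (rule lp_finite[of "KK s"]) (simp add: tt_def)

definition "pick s R = (SOME n. R \<le> n \<and> s \<le> n \<and> psum p (\<lambda>m. if m < n then 0 else x m) < 1 / (real s + 1)
   \<and> (\<forall>i<N. psum p (\<lambda>m. (TT i ^^ n) x m - tt s i m) < rho s))"

lemma pick: "R \<le> pick s R \<and> s \<le> pick s R \<and> psum p (\<lambda>m. if m < pick s R then 0 else x m) < 1 / (real s + 1)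
   \<and> (\<forall>i<N. psum p (\<lambda>m. (TT i ^^ pick s R) x m - tt s i m) < rho s)"
proof -
  have "eventually (\<lambda>K. psum p (\<lambda>m. if m < K then 0 else x m) < 1 / (real s + 1)) sequentially"
    by (rule lp_tail[OF x_lp]) simp
  then obtain R0 where R0: "\<And>n. n \<ge> R0 \<Longrightarrow> psum p (\<lambda>m. if m < n then 0 else x m) < 1 / (real s + 1)"
    unfolding eventually_sequentially by auto
  obtain n where n: "n \<ge> max R (max s R0)" "\<forall>i<N. psum p (\<lambda>m. (TT i ^^ n) x m - tt s i m) < rho s"
    using hit_late[of "tt s" "rho s" "max R (max s R0)"] tt_lp rho_pos by blast
  hence "\<exists>n. R \<le> n \<and> s \<le> n \<and> psum p (\<lambda>m. if m < n then 0 else x m) < 1 / (real s + 1)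
   \<and> (\<forall>i<N. psum p (\<lambda>m. (TT i ^^ n) x m - tt s i m) < rho s)"
    using R0[of n] by (intro exI[of _ n]) auto
  from someI_ex[OF this] show ?thesis unfolding pick_def .
qed

definition "U s n = n + (\<Sum>i<N. \<Sum>m<KK s. (f i ^^ n) m)"

primrec nseq where
  "nseq 0 = pick 0 0"
| "nseq (Suc s) = pick (Suc s) (Suc (U s (nseq s)))"

lemma nseq_pick: "\<exists>R. nseq s = pick s R"
  by (cases s) auto

lemma nseq_ge: "s \<le> nseq s"
  using nseq_pick[of s] pick by metis

lemma nseq_tail: "psum p (\<lambda>m. if m < nseq s then 0 else x m) < 1 / (real s + 1)"
  using nseq_pick[of s] pick by metis

lemma nseq_hit: "i < N \<Longrightarrow> psum p (\<lambda>m. (TT i ^^ nseq s) x m - tt s i m) < rho s"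
  using nseq_pick[of s] pick by metis

lemma U_ge: "n \<le> U s n" by (simp add: U_def)

lemma nseq_U: "U s (nseq s) < nseq (Suc s)"
  using pick[where s = "Suc s" and R = "Suc (U s (nseq s))"] by simp

lemma nseq_Suc: "nseq s < nseq (Suc s)"
  using U_ge[of "nseq s" s] nseq_U[of s] by simp

lemma nseq_le_Suc: "nseq n \<le> nseq (Suc n)" using nseq_Suc[of n] by simp

lemma nseq_mono: "s \<le> s' \<Longrightarrow> nseq s \<le> nseq s'"
  by (rule lift_Suc_mono_le[of nseq, OF nseq_le_Suc])

lemma nseq_U_less: "s < s' \<Longrightarrow> U s (nseq s) < nseq s'"
  using nseq_U[of s] nseq_mono[of "Suc s" s'] by simp

definition "blk s = {nseq s .. U s (nseq s)}"

lemma blk_disj: "m \<in> blk s \<Longrightarrow> m \<in> blk s' \<Longrightarrow> s = s'"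
proof (rule ccontr)
  assume m: "m \<in> blk s" "m \<in> blk s'" and ne: "s \<noteq> s'"
  show False
  proof (cases "s < s'")
    case True thus False using nseq_U_less[OF True] m by (auto simp: blk_def)
  next
    case False hence "s' < s" using ne by simp
    thus False using nseq_U_less[of s' s] m by (auto simp: blk_def)
  qed
qed

lemma window:
  assumes i: "i < N" and m: "m < KK s"
  shows "(f i ^^ nseq s) m \<in> blk s"
proof -
  have d: "strict_mono (f i)" "f i 0 > 0" using data[OF i] by (auto simp: pseudo_shift_data_def)
  have lo: "nseq s \<le> (f i ^^ nseq s) m" using funpow_ge[OF d, where n = "nseq s" and m = m] by simp
  have "(f i ^^ nseq s) m \<le> (\<Sum>m<KK s. (f i ^^ nseq s) m)"
    using m by (intro member_le_sum) auto
  also have "\<dots> \<le> (\<Sum>i<N. \<Sum>m<KK s. (f i ^^ nseq s) m)"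
    using i by (intro member_le_sum[where f = "\<lambda>i. \<Sum>m<KK s. (f i ^^ nseq s) m"]) auto
  finally show ?thesis using lo by (auto simp: blk_def U_def)
qed

definition "phi j m = (if \<exists>s. jj s = j \<and> m \<in> blk s then (1::'a) else 0)"

lemma phi_blk:
  assumes q: "q \<in> blk s" shows "phi j q = (if j = jj s then 1 else 0)"
proof (cases "j = jj s")
  case True thus ?thesis using q unfolding phi_def by auto
next
  case False
  have "\<not> (\<exists>s'. jj s' = j \<and> q \<in> blk s')"
    using blk_disj[OF q] False by blast
  thus ?thesis using False unfolding phi_def by auto
qed

lemma phi_norm: "norm (phi j m) \<le> 1" by (simp add: phi_def)

lemma phi_supp: "phi j m \<noteq> 0 \<Longrightarrow> nseq (snd (prod_decode j)) \<le> m"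
proof -
  assume "phi j m \<noteq> 0"
  then obtain s where s: "jj s = j" "m \<in> blk s" unfolding phi_def by (auto split: if_splits)
  have "snd (prod_decode j) \<le> j"
    by (metis le_prod_encode_2 prod.collapse prod_decode_inverse)
  also have "j \<le> s" using jj_le s by blast
  finally have "nseq (snd (prod_decode j)) \<le> nseq s" by (rule nseq_mono)
  thus ?thesis using s by (auto simp: blk_def)
qed

end



context dhs begin

definition "g j = (\<lambda>m. (if m = fst (prod_decode j) then 1 else 0) + x m * phi j m)"

lemma xphi_lp: "(\<lambda>m. x m * phi j m) \<in> lp_space p"
  by (rule lp_dom(1)[OF x_lp p0, of 1]) (auto simp: norm_mult intro: mult_left_le phi_norm)

lemma g_lp: "g j \<in> lp_space p"
  unfolding g_def
  by (rule lp_add[OF _ xphi_lp p0], rule lp_finite[of "Suc (fst (prod_decode j))"]) auto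

lemma sum_lp: fixes L :: nat shows "(\<And>j. u j \<in> lp_space p) \<Longrightarrow> (\<lambda>m. \<Sum>j<L. c j * u j m) \<in> lp_space p"
proof (induction L)
  case 0 thus ?case using lp_zero by simp
next
  case (Suc L)
  have "(\<lambda>m. (\<Sum>j<L. c j * u j m) + c L * u L m) \<in> lp_space p"
    by (rule lp_add[OF Suc.IH lp_scale(1)[OF Suc.prems p0] p0]) (rule Suc.prems)
  thus ?case by simp
qed

definition "MM = {v. \<exists>a L. (\<forall>j\<ge>L. a j = 0) \<and> v = (\<lambda>m. \<Sum>j<L. a j * g j m)}"

lemma ext_sum:
  fixes L L' :: nat
  assumes "\<forall>j\<ge>L. a j = (0::'a)" "L \<le> L'"
  shows "(\<Sum>j<L'. a j * h j) = (\<Sum>j<L. a j * h j)"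
  using assms(2)
proof (induction L' rule: dec_induct)
  case base then show ?case by simp
next
  case (step n) then show ?case using assms(1) by simp
qed

lemma MM_lp: assumes "v \<in> MM" shows "v \<in> lp_space p"
proof -
  obtain a L where "v = (\<lambda>m. \<Sum>j<L. a j * g j m)" using assms unfolding MM_def by blast
  thus ?thesis using sum_lp[where u = g and L = L and c = a, OF g_lp] by simp
qed

lemma MM_zero: "(\<lambda>m. 0) \<in> MM"
  unfolding MM_def by (rule CollectI, rule exI[of _ "\<lambda>_. 0"], rule exI[of _ 0]) simp

lemma MM_add: assumes "u \<in> MM" "v \<in> MM" shows "(\<lambda>m. u m + v m) \<in> MM"
proof -
  obtain a L where a: "\<forall>j\<ge>L. a j = 0" "u = (\<lambda>m. \<Sum>j<L. a j * g j m)" using assms(1) unfolding MM_def by blast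
  obtain b L' where b: "\<forall>j\<ge>L'. b j = 0" "v = (\<lambda>m. \<Sum>j<L'. b j * g j m)" using assms(2) unfolding MM_def by blast
  have "(\<lambda>m. u m + v m) = (\<lambda>m. \<Sum>j<L + L'. (a j + b j) * g j m)"
  proof
    fix m
    have "u m = (\<Sum>j<L + L'. a j * g j m)" using ext_sum[OF a(1), of "L + L'"] a(2) by simp
    moreover have "v m = (\<Sum>j<L + L'. b j * g j m)" using ext_sum[OF b(1), of "L + L'"] b(2) by simp
    ultimately show "u m + v m = (\<Sum>j<L + L'. (a j + b j) * g j m)"
      by (simp add: sum.distrib distrib_right)
  qed
  moreover have "\<forall>j\<ge>L + L'. a j + b j = 0" using a(1) b(1) by simp
  ultimately show ?thesis unfolding MM_def by (intro CollectI exI[of _ "\<lambda>j. a j + b j"] exI[of _ "L + L'"]) simp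
qed

lemma MM_scale: assumes "v \<in> MM" shows "(\<lambda>m. c * v m) \<in> MM"
proof -
  obtain a L where a: "\<forall>j\<ge>L. a j = 0" "v = (\<lambda>m. \<Sum>j<L. a j * g j m)" using assms(1) unfolding MM_def by blast
  have "(\<lambda>m. c * v m) = (\<lambda>m. \<Sum>j<L. (c * a j) * g j m)"
    using a(2) by (simp add: sum_distrib_left mult.assoc)
  moreover have "\<forall>j\<ge>L. c * a j = 0" using a(1) by simp
  ultimately show ?thesis unfolding MM_def by (intro CollectI exI[of _ "\<lambda>j. c * a j"] exI[of _ L]) simp
qed

lemma MM_g: "g j \<in> MM"
proof -
  have "g j = (\<lambda>m. \<Sum>i<Suc j. (if i = j then 1 else 0) * g i m)"
    by (simp add: if_distrib cong: if_cong)
  moreover have "\<forall>i\<ge>Suc j. (if i = j then (1::'a) else 0) = 0" by simp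
  ultimately show ?thesis unfolding MM_def by (intro CollectI exI[of _ "\<lambda>i. if i = j then (1::'a) else 0"] exI[of _ "Suc j"]) simp
qed

lemma MM_sum: fixes L :: nat shows "(\<lambda>m. \<Sum>k<L. c k * g (h k) m) \<in> MM"
proof (induction L)
  case 0 thus ?case using MM_zero by simp
next
  case (Suc L)
  have "(\<lambda>m. (\<Sum>k<L. c k * g (h k) m) + c L * g (h L) m) \<in> MM"
    by (rule MM_add[OF Suc.IH MM_scale[OF MM_g]])
  thus ?case by simp
qed

end



context dhs begin

lemma MM_dense:
  assumes y: "y \<in> lp_space p" and eps: "\<epsilon> > 0"
  shows "\<exists>v\<in>MM. lp_norm p (\<lambda>m. v m - y m) < \<epsilon>"
proof -
  define e where "e = \<epsilon> powr p"
  have e0: "e > 0" using eps by (simp add: e_def)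
  define e' where "e' = e / (4 * 2 powr p)"
  have e'0: "e' > 0" using e0 by (simp add: e'_def)
  have "eventually (\<lambda>K. psum p (\<lambda>m. if m < K then 0 else y m) < e') sequentially"
    by (rule lp_tail[OF y e'0])
  then obtain L where L: "psum p (\<lambda>m. if m < L then 0 else y m) < e'"
    unfolding eventually_sequentially by auto
  define Y where "Y = (\<Sum>k<L. norm (y k))"
  have Y0: "Y \<ge> 0" by (simp add: Y_def sum_nonneg)
  obtain l :: nat where l: "Y powr p / e' < real l"
    using reals_Archimedean2 by blast
  define v where "v = (\<lambda>m. \<Sum>k<L. y k * g (prod_encode (k, l)) m)"
  have vM: "v \<in> MM" unfolding v_def by (rule MM_sum)
  define tl where "tl = (\<lambda>m. if m < L then 0 else y m)"
  define xt where "xt = (\<lambda>m. if m < nseq l then 0 else x m)"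
  define sc where "sc = (\<lambda>m. x m * (\<Sum>k<L. y k * phi (prod_encode (k, l)) m))"
  have eq: "v m - y m = sc m - tl m" for m
  proof -
    have "v m = (\<Sum>k<L. y k * (if m = k then 1 else 0)) + (\<Sum>k<L. y k * (x m * phi (prod_encode (k, l)) m))"
      by (simp add: v_def g_def distrib_left sum.distrib)
    also have "(\<Sum>k<L. y k * (if m = k then 1 else 0)) = (\<Sum>k<L. if m = k then y k else 0)"
      by (rule sum.cong) auto
    also have "\<dots> = (if m < L then y m else 0)" by (simp add: sum.delta)
    also have "(\<Sum>k<L. y k * (x m * phi (prod_encode (k, l)) m)) = sc m"
      by (simp add: sc_def sum_distrib_left mult.left_commute)
    finally show ?thesis by (simp add: tl_def)
  qed
  have xtlp: "xt \<in> lp_space p"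
    by (rule lp_dom(1)[OF x_lp p0, of 1]) (auto simp: xt_def)
  have xtps: "psum p xt < 1 / (real l + 1)" using nseq_tail[of l] by (simp add: xt_def)
  have tllp: "tl \<in> lp_space p"
    by (rule lp_dom(1)[OF y p0, of 1]) (auto simp: tl_def)
  have tlps: "psum p tl < e'" using L by (simp add: tl_def)
  have scle: "norm (sc m) \<le> Y * norm (xt m)" for m
  proof (cases "m < nseq l")
    case True
    have "phi (prod_encode (k, l)) m = 0" for k
      using phi_supp[of "prod_encode (k, l)" m] True by auto
    thus ?thesis using Y0 by (simp add: sc_def)
  next
    case False
    have "norm (\<Sum>k<L. y k * phi (prod_encode (k, l)) m) \<le> (\<Sum>k<L. norm (y k * phi (prod_encode (k, l)) m))"
      by (rule norm_sum)
    also have "\<dots> \<le> Y" unfolding Y_def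
      by (rule sum_mono) (auto simp: norm_mult intro: mult_left_le phi_norm)
    finally have "norm (x m) * norm (\<Sum>k<L. y k * phi (prod_encode (k, l)) m) \<le> norm (x m) * Y"
      by (intro mult_left_mono) auto
    thus ?thesis using False by (simp add: sc_def xt_def norm_mult mult.commute)
  qed
  have sclp: "sc \<in> lp_space p" and scps: "psum p sc \<le> Y powr p * psum p xt"
    using lp_dom[OF xtlp p0 Y0 scle] by auto
  have "Y powr p * psum p xt \<le> Y powr p * (1 / (real l + 1))"
    using xtps by (intro mult_left_mono) auto
  also have "\<dots> < e'"
  proof -
    have "Y powr p < e' * real l" using l e'0 by (simp add: divide_less_eq mult.commute)
    also have "\<dots> \<le> e' * (real l + 1)" using e'0 by simp
    finally show ?thesis using e'0 by (simp add: divide_less_eq)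
  qed
  finally have scps': "psum p sc < e'" using scps by simp
  have dlp: "(\<lambda>m. v m - y m) \<in> lp_space p" by (rule lp_diff[OF MM_lp[OF vM] y p0])
  have "psum p (\<lambda>m. v m - y m) \<le> 2 powr p * (psum p sc + psum p tl)"
    by (rule lp_tri(2)[OF sclp tllp p0]) (simp add: eq norm_triangle_ineq4)
  also have "\<dots> < 2 powr p * (e' + e')"
    using scps' tlps by (intro mult_strict_left_mono) auto
  also have "\<dots> = e / 2" by (simp add: e'_def)
  also have "\<dots> < e" using e0 by simp
  finally have "psum p (\<lambda>m. v m - y m) < \<epsilon> powr p" by (simp add: e_def)
  hence "lp_norm p (\<lambda>m. v m - y m) < \<epsilon>" using lp_norm_less[OF dlp eps p0] by simp
  thus ?thesis using vM by blast
qed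

end



context dhs begin

lemma fst_decode_le: "fst (prod_decode j) \<le> j"
  by (metis le_prod_encode_1 prod.collapse prod_decode_inverse)

lemma MM_hc:
  assumes vM: "v \<in> MM" and nz: "v \<noteq> (\<lambda>m. 0)"
  shows "d_hypercyclic_vector p N (\<lambda>i. pseudo_shift (f i) (w i)) v"
proof -
  obtain a L where a: "\<forall>j\<ge>L. a j = 0" and v: "v = (\<lambda>m. \<Sum>j<L. a j * g j m)"
    using vM unfolding MM_def by blast
  obtain j0 where j0: "j0 < L" "a j0 \<noteq> 0"
  proof (rule ccontr)
    assume "\<not> thesis"
    hence "\<forall>j<L. a j = 0" using that by blast
    hence "v = (\<lambda>m. 0)" unfolding v by simp
    thus False using nz by simp
  qed
  define c where "c = a j0"
  have c0: "c \<noteq> 0" using j0 by (simp add: c_def)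
  define A where "A = (\<Sum>j<L. norm (a j))"
  have cA: "norm c \<le> A" unfolding A_def c_def
    using j0 by (intro member_le_sum[where f = "\<lambda>j. norm (a j)"]) auto
  have A0: "A \<ge> 0" using cA norm_ge_zero order_trans by blast
  define psi where "psi q = (\<Sum>j<L. a j * phi j q)" for q
  have psiA: "norm (psi q) \<le> A" for q
  proof -
    have "norm (psi q) \<le> (\<Sum>j<L. norm (a j * phi j q))" unfolding psi_def by (rule norm_sum)
    also have "\<dots> \<le> A" unfolding A_def
      by (rule sum_mono) (auto simp: norm_mult intro: mult_left_le phi_norm)
    finally show ?thesis .
  qed
  have vlp: "v \<in> lp_space p" by (rule MM_lp[OF vM])
  show ?thesis unfolding d_hypercyclic_vector_def
  proof (intro conjI vlp allI impI)
    fix y :: "nat \<Rightarrow> nat \<Rightarrow> 'a" and \<epsilon> :: real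
    assume y: "\<forall>i<N. y i \<in> lp_space p" and eps: "\<epsilon> > 0"
    define e where "e = \<epsilon> powr p"
    have e0: "e > 0" using eps by (simp add: e_def)
    define Q2 where "Q2 = (2::real) powr p"
    have Q2: "Q2 \<ge> 1" unfolding Q2_def using p0 by (intro ge_one_powr_ge_zero) auto
    define Ap where "Ap = A powr p"
    have Ap0: "Ap \<ge> 0" by (simp add: Ap_def)
    define BB where "BB = Q2 * Q2 * (Ap + 1)"
    have BB0: "BB > 0" using Q2 Ap0 by (simp add: BB_def)
    define \<eta> where "\<eta> = e / (4 * BB)"
    have \<eta>0: "\<eta> > 0" using e0 BB0 by (simp add: \<eta>_def)
    define yc where "yc i = (\<lambda>m. inverse c * y i m)" for i
    have yclp: "yc i \<in> lp_space p" if "i < N" for i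
      unfolding yc_def using lp_scale(1)[OF _ p0] y that by blast
    obtain J where J: "\<forall>i<N. psum p (\<lambda>m. (TT i ^^ J) x m - yc i m) < \<eta>"
      using hit[of yc \<eta>, OF yclp \<eta>0] by blast
    obtain r0 :: nat where r0: "1 / \<eta> < real r0" using reals_Archimedean2 by blast
    define r where "r = max L r0"
    have rL: "L \<le> r" by (simp add: r_def)
    have r\<eta>: "1 / (real r + 1) < \<eta>"
    proof -
      have "1 / \<eta> < real r + 1" using r0 by (simp add: r_def)
      thus ?thesis using \<eta>0 by (simp add: divide_less_eq mult.commute)
    qed
    define s where "s = prod_encode (j0, prod_encode (J, r))"
    have s: "jj s = j0" "JJ s = J" "rr s = r" by (simp_all add: s_def decode_enc)
    have rho: "rho s < \<eta>" using r\<eta> s by (simp add: rho_def)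
    define n where "n = nseq s"
    have nL: "L \<le> n"
    proof -
      have "r \<le> prod_encode (J, r)" by (rule le_prod_encode_2)
      also have "\<dots> \<le> s" unfolding s_def by (rule le_prod_encode_2)
      also have "s \<le> n" unfolding n_def by (rule nseq_ge)
      finally show ?thesis using rL by simp
    qed
    have main: "psum p (\<lambda>m. (TT i ^^ n) v m - y i m) < e" if i: "i < N" for i
    proof -
      have d: "strict_mono (f i)" "f i 0 > 0" using data[OF i] by (auto simp: pseudo_shift_data_def)
      define F where "F = f i ^^ n"
      have Fge: "n \<le> F m" for m using funpow_ge[OF d, where n = n and m = m] by (simp add: F_def)
      have Tv: "(TT i ^^ n) v m = (TT i ^^ n) x m * psi (F m)" for m
      proof -
        have "v (F m) = (\<Sum>j<L. a j * (x (F m) * phi j (F m)))" unfolding v g_def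
        proof (intro sum.cong refl)
          fix j assume "j \<in> {..<L}"
          hence "fst (prod_decode j) < F m" using fst_decode_le[of j] nL Fge[of m] by simp
          thus "a j * ((if F m = fst (prod_decode j) then 1 else 0) + x (F m) * phi j (F m)) =
                a j * (x (F m) * phi j (F m))" by simp
        qed
        also have "\<dots> = x (F m) * psi (F m)"
          by (simp add: psi_def sum_distrib_left mult.left_commute)
        finally show ?thesis by (simp add: ps_funpow F_def mult.assoc)
      qed
      have psiK: "psi (F m) = c" if m: "m < KK s" for m
      proof -
        have blk: "F m \<in> blk s" using window[OF i m] by (simp add: F_def n_def)
        have "psi (F m) = (\<Sum>j<L. if j = j0 then a j else 0)"
          unfolding psi_def by (rule sum.cong) (auto simp: phi_blk[OF blk] s)
        also have "\<dots> = c" using j0 by (simp add: c_def)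
        finally show ?thesis .
      qed
      define X1 where "X1 = (\<lambda>m. (TT i ^^ n) x m - tt s i m)"
      have X1lp: "X1 \<in> lp_space p" unfolding X1_def by (rule lp_diff[OF orb_lp[OF i x_lp] tt_lp p0])
      have X1ps: "psum p X1 < \<eta>" using nseq_hit[OF i, of s] rho by (simp add: X1_def n_def)
      define X2 where "X2 = (\<lambda>m. if m < KK s then 0 else (TT i ^^ J) x m)"
      have X2lp: "X2 \<in> lp_space p"
        unfolding X2_def by (rule lp_dom(1)[OF orb_lp[OF i x_lp] p0, of 1]) auto
      have X2ps: "psum p X2 < \<eta>" using KK[OF i, of s] rho unfolding s(2) X2_def by linarith
      define X3 where "X3 = (\<lambda>m. (TT i ^^ J) x m - yc i m)"
      have X3lp: "X3 \<in> lp_space p" unfolding X3_def by (rule lp_diff[OF orb_lp[OF i x_lp] yclp[OF i] p0])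
      have X3ps: "psum p X3 < \<eta>" using J i by (simp add: X3_def)
      define P where "P = (\<lambda>m. (TT i ^^ n) v m - c * tt s i m)"
      define Q where "Q = (\<lambda>m. c * (tt s i m - (TT i ^^ J) x m))"
      define R where "R = (\<lambda>m. c * X3 m)"
      have Ple: "norm (P m) \<le> A * norm (X1 m)" for m
      proof (cases "m < KK s")
        case True
        have "P m = c * X1 m" using True by (simp add: P_def X1_def Tv psiK algebra_simps)
        thus ?thesis using cA by (simp add: norm_mult mult_right_mono)
      next
        case False
        have "P m = (TT i ^^ n) x m * psi (F m)" "X1 m = (TT i ^^ n) x m"
          using False by (simp_all add: P_def X1_def Tv tt_def)
        thus ?thesis using psiA[of "F m"] by (simp add: norm_mult mult.commute mult_right_mono)
      qed
      have Qle: "norm (Q m) \<le> A * norm (X2 m)" for m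
        using cA by (cases "m < KK s") (auto simp: Q_def X2_def tt_def s(2) norm_mult mult_right_mono)
      have Rle: "norm (R m) \<le> A * norm (X3 m)" for m
        using cA by (simp add: R_def norm_mult mult_right_mono)
      have Plp: "P \<in> lp_space p" and Pps: "psum p P \<le> Ap * psum p X1"
        using lp_dom[OF X1lp p0 A0 Ple] by (auto simp: Ap_def)
      have Qlp: "Q \<in> lp_space p" and Qps: "psum p Q \<le> Ap * psum p X2"
        using lp_dom[OF X2lp p0 A0 Qle] by (auto simp: Ap_def)
      have Rlp: "R \<in> lp_space p" and Rps: "psum p R \<le> Ap * psum p X3"
        using lp_dom[OF X3lp p0 A0 Rle] by (auto simp: Ap_def)
      define Z where "Z = Ap * \<eta>"
      have Z0: "Z \<ge> 0" using Ap0 \<eta>0 by (simp add: Z_def)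
      have PZ: "psum p P \<le> Z" using Pps X1ps Ap0 unfolding Z_def
        by (meson less_imp_le mult_left_mono order_trans)
      have QZ: "psum p Q \<le> Z" using Qps X2ps Ap0 unfolding Z_def
        by (meson less_imp_le mult_left_mono order_trans)
      have RZ: "psum p R \<le> Z" using Rps X3ps Ap0 unfolding Z_def
        by (meson less_imp_le mult_left_mono order_trans)
      define W where "W = (\<lambda>m. Q m + R m)"
      have Wlp: "W \<in> lp_space p" and Wps: "psum p W \<le> Q2 * (psum p Q + psum p R)"
        using lp_tri[OF Qlp Rlp p0, of W] by (auto simp: W_def Q2_def norm_triangle_ineq)
      have DPW: "(TT i ^^ n) v m - y i m = P m + W m" for m
        using c0 by (simp add: P_def W_def Q_def R_def X3_def yc_def algebra_simps)
      have "psum p (\<lambda>m. (TT i ^^ n) v m - y i m) \<le> Q2 * (psum p P + psum p W)"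
        using lp_tri(2)[OF Plp Wlp p0, of "\<lambda>m. (TT i ^^ n) v m - y i m"]
        by (auto simp: DPW Q2_def norm_triangle_ineq)
      also have "\<dots> \<le> Q2 * (Z + Q2 * (Z + Z))"
        using PZ QZ RZ Wps Q2 by (intro mult_left_mono add_mono) (auto intro: order_trans)
      also have "\<dots> \<le> Q2 * (Q2 * Z + Q2 * (Z + Z))"
        using Q2 Z0 by (intro mult_left_mono add_mono) (auto simp: mult_le_cancel_right1)
      also have "\<dots> = 3 * (Q2 * Q2 * (Ap * \<eta>))" by (simp add: Z_def algebra_simps)
      also have "3 * (Q2 * Q2 * (Ap * \<eta>)) \<le> 3 * (e / 4)"
      proof -
        have "Q2 * Q2 * (Ap * \<eta>) \<le> Q2 * Q2 * ((Ap + 1) * \<eta>)"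
          using Q2 \<eta>0 by (intro mult_left_mono mult_right_mono) auto
        also have "\<dots> = BB * \<eta>" by (simp add: BB_def)
        also have "\<dots> = e / 4" using BB0 by (simp add: \<eta>_def)
        finally show ?thesis by (simp add: algebra_simps)
      qed
      also have "\<dots> < e" using e0 by simp
      finally show ?thesis .
    qed
    show "\<exists>n. \<forall>i<N. lp_norm p (\<lambda>m. ((\<lambda>i. pseudo_shift (f i) (w i)) i ^^ n) v m - y i m) < \<epsilon>"
    proof (intro exI allI impI)
      fix i assume i: "i < N"
      have dlp: "(\<lambda>m. (TT i ^^ n) v m - y i m) \<in> lp_space p"
        by (rule lp_diff[OF orb_lp[OF i vlp]]) (use y i p0 in auto)
      show "lp_norm p (\<lambda>m. ((\<lambda>i. pseudo_shift (f i) (w i)) i ^^ n) v m - y i m) < \<epsilon>"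
        using lp_norm_less[OF dlp eps p0] main[OF i] by (simp add: e_def)
    qed
  qed
qed

end



theorem corollary2p6:
  fixes p :: real and N :: nat
    and f :: "nat \<Rightarrow> nat \<Rightarrow> nat"
    and w :: "nat \<Rightarrow> nat \<Rightarrow> 'a::{real_normed_field, banach}"
  assumes "1 \<le> p"
    and "N \<ge> 2"
    and "\<And>i. i < N \<Longrightarrow> pseudo_shift_data (f i) (w i)"
  shows "d_hypercyclic p N (\<lambda>i. pseudo_shift (f i) (w i)) \<longleftrightarrow>
         (\<exists>M. dense_d_hypercyclic_manifold p N (\<lambda>i. pseudo_shift (f i) (w i)) M)"
proof
  assume "d_hypercyclic p N (\<lambda>i. pseudo_shift (f i) (w i))"
  then obtain x where x: "d_hypercyclic_vector p N (\<lambda>i. pseudo_shift (f i) (w i)) x"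
    unfolding d_hypercyclic_def by blast
  interpret X: dhs p N f w x
    by (unfold_locales) (use assms x in auto)
  have "dense_d_hypercyclic_manifold p N (\<lambda>i. pseudo_shift (f i) (w i)) X.MM"
    unfolding dense_d_hypercyclic_manifold_def
    using X.MM_lp X.MM_zero X.MM_add X.MM_scale X.MM_dense X.MM_hc by blast
  thus "\<exists>M. dense_d_hypercyclic_manifold p N (\<lambda>i. pseudo_shift (f i) (w i)) M" by blast
next
  assume "\<exists>M. dense_d_hypercyclic_manifold p N (\<lambda>i. pseudo_shift (f i) (w i)) M"
  then obtain M where M: "dense_d_hypercyclic_manifold p N (\<lambda>i. pseudo_shift (f i) (w i)) M" by blast
  have p0: "p > 0" using assms(1) by simp
  define e0 :: "nat \<Rightarrow> 'a" where "e0 = (\<lambda>m. if m = 0 then 1 else 0)"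
  have e0lp: "e0 \<in> lp_space p" unfolding e0_def by (rule lp_single(1)[OF p0])
  obtain v where vM: "v \<in> M" and v: "lp_norm p (\<lambda>m. v m - e0 m) < 1"
    using M e0lp unfolding dense_d_hypercyclic_manifold_def by (meson zero_less_one)
  have "v \<noteq> (\<lambda>m. 0)"
  proof
    assume v0: "v = (\<lambda>m. 0)"
    have eq: "(\<lambda>m. v m - e0 m) = (\<lambda>m. if m = 0 then (-1::'a) else 0)"
      by (auto simp: v0 e0_def)
    have lp: "(\<lambda>m. v m - e0 m) \<in> lp_space p" unfolding eq by (rule lp_single(1)[OF p0])
    have "psum p (\<lambda>m. v m - e0 m) < 1 powr p"
      using lp_norm_less[OF lp zero_less_one p0] v by simp
    moreover have "psum p (\<lambda>m. v m - e0 m) = 1" unfolding eq using lp_single(2)[OF p0, of 0 "-1 :: 'a"] by simp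
    ultimately show False by simp
  qed
  hence "d_hypercyclic_vector p N (\<lambda>i. pseudo_shift (f i) (w i)) v"
    using M vM unfolding dense_d_hypercyclic_manifold_def by blast
  thus "d_hypercyclic p N (\<lambda>i. pseudo_shift (f i) (w i))" unfolding d_hypercyclic_def by blast
qed



end
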